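(* If $G$ is an optimal digraph on $n$ vertices, then $\alpha_G > n/4$.
   Context: Digraphs are finite, loopless, with at most one edge $uv$ per ordered pair. A digraph is $2$-free if no distinct $u,v$ have both $uv,vu$ as edges. A circular interval digraph is a digraph together with a fixed arrangement of its vertices in a circle such that for all distinct $u,v,w$ in clockwise order with $uw\in E(G)$, also $uv,vw\in E(G)$. For distinct $u,v$, $d(u,v) = 1 + |\{w: u,w,v \text{ distinct, in clockwise order}\}|$; this is the length of the ordered pair $uv$. A non-edge is an ordered pair $(u,v)$ of distinct vertices with neither $uv$ nor $vu$ an edge; its length is $d(u,v)$. $\alpha_G$ is the minimum length of a non-edge ($\infty$ if none) and $\beta_G$ the maximum length of an edge ($0$ if none). $\xi(G)$ is the number of pairs $(uv,(w,x))$ with $uv\in E(G)$, $(w,x)$ a non-edge, $d(u,v)>d(w,x)$. $\tilde P_3(G)$ is the number of triples $(a,b,c)$ of distinct vertices with $ab,bc\in E(G)$ and $ac,ca\notin E(G)$. For fixed $n\ge 4$, $G$ is optimal if it is a $2$-free circular interval digraph on $n$ vertices maximizing $\tilde P_3$ among all such digraphs and, subject to this, minimizing $\xi(G)$. *)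

theory Defs
  imports Main "HOL-Library.Extended_Real"
begin

(* Vertices are 0..<n, placed on a circle in clockwise order 0,1,...,n-1.
   A digraph is an edge relation E :: nat => nat => bool. *)

definition cw :: "nat \<Rightarrow> nat \<Rightarrow> nat \<Rightarrow> nat \<Rightarrow> bool" where
  "cw n a b c \<longleftrightarrow> a < n \<and> b < n \<and> c < n \<and> a \<noteq> b \<and> b \<noteq> c \<and> a \<noteq> c \<and>
     (b + n - a) mod n < (c + n - a) mod n"

definition dist_cw :: "nat \<Rightarrow> nat \<Rightarrow> nat \<Rightarrow> nat" where
  "dist_cw n u v = 1 + card {w. w < n \<and> cw n u w v}"

definition is_digraph :: "nat \<Rightarrow> (nat \<Rightarrow> nat \<Rightarrow> bool) \<Rightarrow> bool" where
  "is_digraph n E \<longleftrightarrow> (\<forall>u v. E u v \<longrightarrow> u < n \<and> v < n \<and> u \<noteq> v)"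

definition two_free :: "nat \<Rightarrow> (nat \<Rightarrow> nat \<Rightarrow> bool) \<Rightarrow> bool" where
  "two_free n E \<longleftrightarrow> (\<forall>u v. u \<noteq> v \<longrightarrow> \<not> (E u v \<and> E v u))"

definition circ_interval :: "nat \<Rightarrow> (nat \<Rightarrow> nat \<Rightarrow> bool) \<Rightarrow> bool" where
  "circ_interval n E \<longleftrightarrow> (\<forall>u v w. cw n u v w \<and> E u w \<longrightarrow> E u v \<and> E v w)"

definition admissible :: "nat \<Rightarrow> (nat \<Rightarrow> nat \<Rightarrow> bool) \<Rightarrow> bool" where
  "admissible n E \<longleftrightarrow> is_digraph n E \<and> two_free n E \<and> circ_interval n E"

definition non_edge :: "nat \<Rightarrow> (nat \<Rightarrow> nat \<Rightarrow> bool) \<Rightarrow> nat \<Rightarrow> nat \<Rightarrow> bool" where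
  "non_edge n E u v \<longleftrightarrow> u < n \<and> v < n \<and> u \<noteq> v \<and> \<not> E u v \<and> \<not> E v u"

definition alphaG :: "nat \<Rightarrow> (nat \<Rightarrow> nat \<Rightarrow> bool) \<Rightarrow> ereal" where
  "alphaG n E = (if \<exists>u v. non_edge n E u v
     then ereal (real (Min {dist_cw n u v | u v. non_edge n E u v})) else \<infinity>)"

definition xi :: "nat \<Rightarrow> (nat \<Rightarrow> nat \<Rightarrow> bool) \<Rightarrow> nat" where
  "xi n E = card {((u, v), (w, x)). u < n \<and> v < n \<and> E u v \<and> non_edge n E w x \<and>
                     dist_cw n u v > dist_cw n w x}"

definition P3t :: "nat \<Rightarrow> (nat \<Rightarrow> nat \<Rightarrow> bool) \<Rightarrow> nat" where
  "P3t n E = card {(a, b, c). a < n \<and> b < n \<and> c < n \<and> a \<noteq> b \<and> b \<noteq> c \<and> a \<noteq> c \<and>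
                      E a b \<and> E b c \<and> \<not> E a c \<and> \<not> E c a}"

definition optimal :: "nat \<Rightarrow> (nat \<Rightarrow> nat \<Rightarrow> bool) \<Rightarrow> bool" where
  "optimal n E \<longleftrightarrow> admissible n E \<and>
     (\<forall>E'. admissible n E' \<longrightarrow> P3t n E' \<le> P3t n E) \<and>
     (\<forall>E'. admissible n E' \<and> P3t n E' = P3t n E \<longrightarrow> xi n E \<le> xi n E')"

end

theory Submission
  imports Defs
begin


definition dd :: "nat \<Rightarrow> nat \<Rightarrow> nat \<Rightarrow> nat" where
  "dd n u v = (if u \<le> v then v - u else v + n - u)"

lemma mod_dd: "a < n \<Longrightarrow> b < n \<Longrightarrow> (b + n - a) mod n = dd n a b"
proof (cases "a \<le> b")
  case True
  assume "a < n" "b < n"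
  then have "b + n - a = (b - a) + n" using True by simp
  then have "(b + n - a) mod n = (b - a) mod n" by simp
  then show ?thesis using True \<open>a<n\<close> \<open>b<n\<close> by (simp add: dd_def)
next
  case False
  assume "a < n" "b < n"
  then show ?thesis using False by (simp add: dd_def)
qed

lemma cw_iff: "cw n a b c \<longleftrightarrow> a<n \<and> b<n \<and> c<n \<and> a\<noteq>b \<and> b\<noteq>c \<and> a\<noteq>c \<and> dd n a b < dd n a c"
  unfolding cw_def by (auto simp: mod_dd)

definition arc :: "nat \<Rightarrow> nat \<Rightarrow> nat \<Rightarrow> nat set" where
  "arc n a b = {z. z < n \<and> cw n a z b}"

lemma card_arc: "card (arc n a b) = dist_cw n a b - 1"
  unfolding arc_def dist_cw_def by simp

lemma finite_arc: "finite (arc n a b)"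
  unfolding arc_def by simp

lemma dist_eq:
  assumes "a < n" "b < n" "a \<noteq> b"
  shows "dist_cw n a b = dd n a b"
proof -
  let ?S = "{w. w < n \<and> cw n a w b}"
  have inj: "inj_on (dd n a) ?S"
    by (rule inj_onI) (auto simp: cw_iff dd_def split: if_splits)
  have img: "dd n a ` ?S = {1..<dd n a b}"
  proof
    show "dd n a ` ?S \<subseteq> {1..<dd n a b}"
      by (auto simp: cw_iff dd_def split: if_splits)
  next
    show "{1..<dd n a b} \<subseteq> dd n a ` ?S"
    proof
      fix i assume i: "i \<in> {1..<dd n a b}"
      define z where "z = (if a + i < n then a + i else a + i - n)"
      have "z \<in> ?S" "dd n a z = i"
        using i assms unfolding z_def by (auto simp: cw_iff dd_def split: if_splits)
      then show "i \<in> dd n a ` ?S" by force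
    qed
  qed
  have "card ?S = card {1..<dd n a b}"
    using card_image[OF inj] img by simp
  moreover have "dd n a b \<ge> 1" using assms by (auto simp: dd_def)
  ultimately show ?thesis unfolding dist_cw_def by simp
qed

lemma dd_inj: "a<n \<Longrightarrow> x<n \<Longrightarrow> y<n \<Longrightarrow> dd n a x = dd n a y \<Longrightarrow> x = y"
  unfolding dd_def by (cases "a \<le> x"; cases "a \<le> y"; simp; arith)

lemma dd_inj': "a<n \<Longrightarrow> x<n \<Longrightarrow> y<n \<Longrightarrow> dd n x a = dd n y a \<Longrightarrow> x = y"
  unfolding dd_def by (cases "x \<le> a"; cases "y \<le> a"; simp; arith)

lemma card_dd_le:
  assumes "a < n"
  shows "card {z. z < n \<and> z \<noteq> a \<and> dd n a z \<le> j} \<le> j"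
proof -
  let ?S = "{z. z < n \<and> z \<noteq> a \<and> dd n a z \<le> j}"
  have inj: "inj_on (dd n a) ?S"
    by (rule inj_onI) (use dd_inj assms in blast)
  have "dd n a ` ?S \<subseteq> {1..j}" using assms by (auto simp: dd_def split: if_splits)
  then have "card (dd n a ` ?S) \<le> j" by (metis card_atLeastAtMost card_mono diff_Suc_1 finite_atLeastAtMost)
  then show ?thesis using card_image[OF inj] by simp
qed

lemma card_dd_le':
  assumes "a < n"
  shows "card {z. z < n \<and> z \<noteq> a \<and> dd n z a \<le> j} \<le> j"
proof -
  let ?S = "{z. z < n \<and> z \<noteq> a \<and> dd n z a \<le> j}"
  have inj: "inj_on (\<lambda>z. dd n z a) ?S"
    by (rule inj_onI) (use dd_inj' assms in blast)
  have "(\<lambda>z. dd n z a) ` ?S \<subseteq> {1..j}" using assms by (auto simp: dd_def split: if_splits)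
  then have "card ((\<lambda>z. dd n z a) ` ?S) \<le> j" by (metis card_atLeastAtMost card_mono diff_Suc_1 finite_atLeastAtMost)
  then show ?thesis using card_image[OF inj] by simp
qed

lemma cw_cases: "a<n \<Longrightarrow> b<n \<Longrightarrow> c<n \<Longrightarrow> a\<noteq>b \<Longrightarrow> b\<noteq>c \<Longrightarrow> a\<noteq>c \<Longrightarrow> cw n a b c \<or> cw n c b a"
  by (auto simp: cw_iff dd_def split: if_splits)

lemma cw_rot: "cw n a b c \<Longrightarrow> cw n b c a"
  by (auto simp: cw_iff dd_def split: if_splits)

lemma cw_not_both: "cw n a b c \<Longrightarrow> \<not> cw n c b a"
  by (auto simp: cw_iff dd_def split: if_splits)

lemma cw_split: "cw n a z c \<Longrightarrow> cw n a d c \<Longrightarrow> z \<noteq> d \<Longrightarrow> cw n a z d \<or> cw n d z c"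
  by (auto simp: cw_iff dd_def split: if_splits)

lemma dd_sum: "a<n \<Longrightarrow> b<n \<Longrightarrow> a\<noteq>b \<Longrightarrow> dd n a b + dd n b a = n"
  by (auto simp: dd_def)

lemma dd_pos: "a<n \<Longrightarrow> b<n \<Longrightarrow> a\<noteq>b \<Longrightarrow> 0 < dd n a b \<and> dd n a b < n"
  by (auto simp: dd_def)

lemma cw_dd1: "cw n a b c \<Longrightarrow> dd n a b < dd n a c"
  by (auto simp: cw_iff)

lemma cw_dd2: "cw n a b c \<Longrightarrow> dd n b c < dd n a c"
  by (auto simp: cw_iff dd_def split: if_splits)

lemma cw_sum: "cw n a b c \<Longrightarrow> dd n a b + dd n b c = dd n a c"
  by (auto simp: cw_iff dd_def split: if_splits)

lemma dd_lt_cw: "a<n \<Longrightarrow> b<n \<Longrightarrow> c<n \<Longrightarrow> a\<noteq>b \<Longrightarrow> b\<noteq>c \<Longrightarrow> a\<noteq>c \<Longrightarrow> dd n b c < dd n a c \<Longrightarrow> cw n a b c"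
  by (auto simp: cw_iff dd_def split: if_splits)

lemma dd_lt_cw': "a<n \<Longrightarrow> b<n \<Longrightarrow> c<n \<Longrightarrow> a\<noteq>b \<Longrightarrow> b\<noteq>c \<Longrightarrow> a\<noteq>c \<Longrightarrow> dd n a b < dd n a c \<Longrightarrow> cw n a b c"
  by (auto simp: cw_iff)



definition P3set :: "nat \<Rightarrow> (nat \<Rightarrow> nat \<Rightarrow> bool) \<Rightarrow> (nat \<times> nat \<times> nat) set" where
  "P3set n E = {(a, b, c). a < n \<and> b < n \<and> c < n \<and> a \<noteq> b \<and> b \<noteq> c \<and> a \<noteq> c \<and>
                      E a b \<and> E b c \<and> \<not> E a c \<and> \<not> E c a}"

lemma P3t_eq: "P3t n E = card (P3set n E)"
  unfolding P3t_def P3set_def by simp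

lemma finite_P3set: "finite (P3set n E)"
proof -
  have "P3set n E \<subseteq> {..<n} \<times> {..<n} \<times> {..<n}" unfolding P3set_def by auto
  then show ?thesis by (rule finite_subset) simp
qed

definition XIset :: "nat \<Rightarrow> (nat \<Rightarrow> nat \<Rightarrow> bool) \<Rightarrow> ((nat \<times> nat) \<times> (nat \<times> nat)) set" where
  "XIset n E = {((u, v), (w, x)). u < n \<and> v < n \<and> E u v \<and> non_edge n E w x \<and>
                     dist_cw n u v > dist_cw n w x}"

lemma xi_eq: "xi n E = card (XIset n E)"
  unfolding xi_def XIset_def by simp

lemma finite_XIset: "finite (XIset n E)"
proof -
  have "XIset n E \<subseteq> ({..<n} \<times> {..<n}) \<times> ({..<n} \<times> {..<n})"
    unfolding XIset_def non_edge_def by auto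
  then show ?thesis by (rule finite_subset) simp
qed

lemma card_trade:
  assumes "finite A" "finite B" "finite X" "A - B \<subseteq> X" "Y \<subseteq> B - A"
  shows "card A + card Y \<le> card B + card X"
proof -
  have A: "card A = card (A \<inter> B) + card (A - B)"
    using card_Un_disjoint[of "A \<inter> B" "A - B"] assms(1)
    by (metis Int_Diff_Un Int_Diff_disjoint finite_Diff finite_Int)
  have B: "card B = card (A \<inter> B) + card (B - A)"
    using card_Un_disjoint[of "A \<inter> B" "B - A"] assms(2)
    by (metis Int_Diff_Un Int_Diff_disjoint finite_Diff finite_Int inf_commute)
  have "card (A - B) \<le> card X" using assms by (simp add: card_mono)
  moreover have "card Y \<le> card (B - A)" using assms by (simp add: card_mono)
  ultimately show ?thesis using A B by linarith
qed

locale ag =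
  fixes n :: nat and E :: "nat \<Rightarrow> nat \<Rightarrow> bool"
  assumes n4: "4 \<le> n" and adm: "admissible n E"
begin

lemma dig: "E u v \<Longrightarrow> u < n \<and> v < n \<and> u \<noteq> v"
  using adm unfolding admissible_def is_digraph_def by blast

lemma tf: "E u v \<Longrightarrow> \<not> E v u"
  using adm dig unfolding admissible_def two_free_def by blast

lemma ci: "cw n u v w \<Longrightarrow> E u w \<Longrightarrow> E u v \<and> E v w"
  using adm unfolding admissible_def circ_interval_def by blast

lemma dist_dd: "E u v \<Longrightarrow> dist_cw n u v = dd n u v"
  using dig dist_eq by blast

lemma removal:
  assumes e: "E u0 v0" and maxL: "\<And>a b. E a b \<Longrightarrow> dist_cw n a b \<le> dist_cw n u0 v0"
  defines "E' \<equiv> \<lambda>a b. E a b \<and> (a, b) \<noteq> (u0, v0)"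
  shows "admissible n E'"
    and "card (P3set n E) + (dist_cw n u0 v0 - 1) \<le> card (P3set n E') + (dist_cw n v0 u0 - 1)"
proof -
  have u0: "u0 < n" "v0 < n" "u0 \<noteq> v0" using dig[OF e] by auto
  show "admissible n E'"
    unfolding admissible_def is_digraph_def two_free_def circ_interval_def
  proof (intro conjI)
    show "\<forall>u v. E' u v \<longrightarrow> u < n \<and> v < n \<and> u \<noteq> v" using dig unfolding E'_def by blast
    show "\<forall>u v. u \<noteq> v \<longrightarrow> \<not> (E' u v \<and> E' v u)" using tf unfolding E'_def by blast
  next
    show "\<forall>u v w. cw n u v w \<and> E' u w \<longrightarrow> E' u v \<and> E' v w"
    proof (intro allI impI)
    fix u v w assume a: "cw n u v w \<and> E' u w"
    then have c: "cw n u v w" and euw: "E u w" unfolding E'_def by auto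
    from ci[OF c euw] have 1: "E u v" "E v w" by auto
    have "(u, v) \<noteq> (u0, v0)"
    proof
      assume "(u, v) = (u0, v0)"
      then have "dd n u0 v0 < dd n u0 w" using cw_dd1[OF c] by simp
      moreover have "dist_cw n u0 w \<le> dist_cw n u0 v0" using maxL euw \<open>(u,v) = (u0,v0)\<close> by simp
      ultimately show False using dist_dd euw e \<open>(u,v) = (u0,v0)\<close> by simp
    qed
    moreover have "(v, w) \<noteq> (u0, v0)"
    proof
      assume "(v, w) = (u0, v0)"
      then have "dd n u0 v0 < dd n u v0" using cw_dd2[OF c] by simp
      moreover have "dist_cw n u v0 \<le> dist_cw n u0 v0" using maxL euw \<open>(v,w) = (u0,v0)\<close> by simp
      ultimately show False using dist_dd euw e \<open>(v,w) = (u0,v0)\<close> by simp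
    qed
    ultimately show "E' u v \<and> E' v w" using 1 unfolding E'_def by simp
  qed
  qed
  let ?A = "P3set n E" and ?B = "P3set n E'"
  let ?I = "{p. E p u0}" and ?O = "{d. E v0 d}"
  let ?C = "arc n v0 u0"
  let ?X = "(\<lambda>c. (u0, v0, c)) ` (?O - ?I) \<union> (\<lambda>a. (a, u0, v0)) ` (?I - ?O)"
  let ?Y = "(\<lambda>b. (u0, b, v0)) ` arc n u0 v0"
  have finI: "finite ?I" by (rule finite_subset[of _ "{..<n}"]) (use dig in auto)
  have finO: "finite ?O" by (rule finite_subset[of _ "{..<n}"]) (use dig in auto)
  have AB: "?A - ?B \<subseteq> ?X"
  proof
    fix t assume t: "t \<in> ?A - ?B"
    obtain a b c where abc: "t = (a, b, c)" by (cases t) auto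
    from t abc have inA: "a < n \<and> b < n \<and> c < n \<and> a \<noteq> b \<and> b \<noteq> c \<and> a \<noteq> c \<and>
                      E a b \<and> E b c \<and> \<not> E a c \<and> \<not> E c a" unfolding P3set_def by auto
    from t abc have "\<not> (E' a b \<and> E' b c \<and> \<not> E' a c \<and> \<not> E' c a)" unfolding P3set_def using inA by auto
    then have "(a, b) = (u0, v0) \<or> (b, c) = (u0, v0)" using inA unfolding E'_def by auto
    then show "t \<in> ?X"
    proof
      assume "(a, b) = (u0, v0)" then show ?thesis using inA abc by auto
    next
      assume "(b, c) = (u0, v0)" then show ?thesis using inA abc by auto
    qed
  qed
  have YB: "?Y \<subseteq> ?B - ?A"
  proof
    fix t assume "t \<in> ?Y"
    then obtain b where b: "b \<in> arc n u0 v0" and t: "t = (u0, b, v0)" by auto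
    from b have c: "cw n u0 b v0" unfolding arc_def by auto
    have "E u0 b \<and> E b v0" using ci[OF c e] .
    moreover have "b < n" "b \<noteq> u0" "b \<noteq> v0" using c by (auto simp: cw_iff)
    ultimately show "t \<in> ?B - ?A" using t u0 e tf[OF e] unfolding P3set_def E'_def by auto
  qed
  have cY: "card ?Y = dist_cw n u0 v0 - 1"
  proof -
    have "inj_on (\<lambda>b. (u0, b, v0)) (arc n u0 v0)" by (rule inj_onI) auto
    then show ?thesis using card_image card_arc by metis
  qed
  have cX: "card ?X \<le> card (?O - ?I) + card (?I - ?O)"
  proof -
    have "card ?X \<le> card ((\<lambda>c. (u0, v0, c)) ` (?O - ?I)) + card ((\<lambda>a. (a, u0, v0)) ` (?I - ?O))"
      by (rule card_Un_le)
    also have "\<dots> \<le> card (?O - ?I) + card (?I - ?O)"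
      using card_image_le finI finO by (metis add_le_mono finite_Diff)
    finally show ?thesis .
  qed
  have IC: "?I \<subseteq> ?C"
  proof
    fix p assume "p \<in> ?I" then have ep: "E p u0" by simp
    have "p \<noteq> v0" using tf e ep by blast
    moreover have "\<not> cw n u0 p v0" using ci[of u0 p v0] e tf ep by blast
    ultimately show "p \<in> ?C" using cw_cases[where a=u0 and b=p and c=v0] dig[OF ep] u0 unfolding arc_def by auto
  qed
  have OC: "?O \<subseteq> ?C"
  proof
    fix d assume "d \<in> ?O" then have ed: "E v0 d" by simp
    have "d \<noteq> u0" using tf e ed by blast
    moreover have "\<not> cw n u0 d v0" using ci[of u0 d v0] e tf ed by blast
    ultimately show "d \<in> ?C" using cw_cases[where a=u0 and b=d and c=v0] dig[OF ed] u0 unfolding arc_def by auto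
  qed
  have cC: "card (?O - ?I) + card (?I - ?O) \<le> card ?C"
  proof -
    have "card (?O - ?I) + card (?I - ?O) = card ((?O - ?I) \<union> (?I - ?O))"
      using finI finO by (subst card_Un_disjoint) auto
    also have "\<dots> \<le> card ?C" using IC OC finite_arc by (intro card_mono) auto
    finally show ?thesis .
  qed
  have "card ?A + card ?Y \<le> card ?B + card ?X"
    using card_trade[OF finite_P3set finite_P3set _ AB YB] finI finO by auto
  then show "card (P3set n E) + (dist_cw n u0 v0 - 1) \<le> card (P3set n E') + (dist_cw n v0 u0 - 1)"
    using cY cX cC card_arc[of n v0 u0] by linarith
qed

end


context ag begin

lemma addition:
  assumes ne: "non_edge n E w x" and dk: "dist_cw n w x = k"
    and minimal: "\<And>a b. non_edge n E a b \<Longrightarrow> k \<le> dist_cw n a b"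
    and maxL: "\<And>a b. E a b \<Longrightarrow> dist_cw n a b \<le> L" and L2: "2 * L < n" and k4: "4 * k \<le> n"
  defines "E' \<equiv> \<lambda>a b. E a b \<or> (a = w \<and> b = x)"
  shows "admissible n E'" and "card (P3set n E) \<le> card (P3set n E')"
    and "L \<le> k \<Longrightarrow> 2 \<le> k \<or> (\<exists>p. E p w) \<Longrightarrow> card (P3set n E) < card (P3set n E')"
proof -
  have wx: "w < n" "x < n" "w \<noteq> x" "\<not> E w x" "\<not> E x w" using ne unfolding non_edge_def by auto
  have ddk: "dd n w x = k" using dk dist_eq wx by simp
  have k1: "1 \<le> k" using ddk dd_pos[of w n x] wx by simp
  have mini: "E a b" if "a < n" "b < n" "a \<noteq> b" "dd n a b < k" for a b
  proof (rule ccontr)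
    assume nab: "\<not> E a b"
    show False
    proof (cases "E b a")
      case True
      have "dd n b a \<le> L" using maxL[OF True] dist_dd[OF True] by simp
      moreover have "dd n a b + dd n b a = n" using dd_sum that by blast
      ultimately show False using that(4) L2 k4 by linarith
    next
      case False
      then have "non_edge n E a b" using nab that unfolding non_edge_def by auto
      then have "k \<le> dd n a b" using minimal dist_eq that by fastforce
      then show False using that(4) by simp
    qed
  qed
  have arcOut: "E w b \<and> E b x" if "cw n w b x" for b
  proof -
    have "dd n w b < k" "dd n b x < k" using cw_dd1[OF that] cw_dd2[OF that] ddk by auto
    then show ?thesis using mini that by (auto simp: cw_iff)
  qed
  have Outarc: "cw n w z x" if "E w z" for z
  proof (rule ccontr)
    assume nc: "\<not> cw n w z x"
    have z: "z < n" "z \<noteq> w" "z \<noteq> x" using dig[OF that] wx that by auto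
    have "cw n x z w" using cw_cases[where a=w and b=z and c=x] nc z wx by auto
    then have "cw n w x z" using cw_rot by blast
    then show False using ci that wx by blast
  qed
  let ?A = "P3set n E" and ?B = "P3set n E'"
  let ?I = "{p. E p w}" and ?O = "{d. E x d}"
  let ?C = "arc n x w"
  have finI: "finite ?I" by (rule finite_subset[of _ "{..<n}"]) (use dig in auto)
  have finO: "finite ?O" by (rule finite_subset[of _ "{..<n}"]) (use dig in auto)
  have IC: "cw n x p w" if "E p w" for p
  proof -
    have p: "p < n" "p \<noteq> w" "p \<noteq> x" using dig[OF that] wx that by auto
    have "\<not> cw n w p x" using arcOut tf that by blast
    then show ?thesis using cw_cases[where a=w and b=p and c=x] p wx by auto
  qed
  have OC: "cw n x d w" if "E x d" for d
  proof -
    have d: "d < n" "d \<noteq> w" "d \<noteq> x" using dig[OF that] wx that by auto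
    have "\<not> cw n w d x" using arcOut tf that by blast
    then show ?thesis using cw_cases[where a=w and b=d and c=x] d wx by auto
  qed
  show "admissible n E'"
    unfolding admissible_def is_digraph_def two_free_def circ_interval_def
  proof (intro conjI)
    show "\<forall>u v. E' u v \<longrightarrow> u < n \<and> v < n \<and> u \<noteq> v" using dig wx unfolding E'_def by blast
    show "\<forall>u v. u \<noteq> v \<longrightarrow> \<not> (E' u v \<and> E' v u)" using tf wx unfolding E'_def by blast
  next
    show "\<forall>u v z. cw n u v z \<and> E' u z \<longrightarrow> E' u v \<and> E' v z"
    proof (intro allI impI)
      fix u v z assume a: "cw n u v z \<and> E' u z"
      show "E' u v \<and> E' v z"
      proof (cases "E u z")
        case True then show ?thesis using ci a unfolding E'_def by blast
      next
        case False
        then have "u = w" "z = x" using a unfolding E'_def by auto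
        then show ?thesis using arcOut a unfolding E'_def by blast
      qed
    qed
  qed
  let ?X = "(\<lambda>b. (w, b, x)) ` arc n w x \<union> (\<lambda>d. (x, d, w)) ` (?I \<inter> ?O)"
  let ?Y = "(\<lambda>p. (p, w, x)) ` (?I - ?O) \<union> (\<lambda>d. (w, x, d)) ` (?O - ?I)"
  have AB: "?A - ?B \<subseteq> ?X"
  proof
    fix t assume t: "t \<in> ?A - ?B"
    obtain a b c where abc: "t = (a, b, c)" by (cases t) auto
    from t abc have inA: "a < n \<and> b < n \<and> c < n \<and> a \<noteq> b \<and> b \<noteq> c \<and> a \<noteq> c \<and>
                      E a b \<and> E b c \<and> \<not> E a c \<and> \<not> E c a" unfolding P3set_def by auto
    from t abc have nB: "\<not> (E' a b \<and> E' b c \<and> \<not> E' a c \<and> \<not> E' c a)" unfolding P3set_def using inA by auto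
    have "E' a b" "E' b c" using inA by (simp_all add: E'_def)
    with nB have "E' a c \<or> E' c a" by blast
    moreover have "E' a c \<Longrightarrow> a = w \<and> c = x" using inA by (simp add: E'_def)
    moreover have "E' c a \<Longrightarrow> c = w \<and> a = x" using inA by (simp add: E'_def)
    ultimately have "(a = w \<and> c = x) \<or> (c = w \<and> a = x)" by blast
    then show "t \<in> ?X"
    proof
      assume h: "a = w \<and> c = x"
      then have "b \<in> arc n w x" using Outarc inA unfolding arc_def by auto
      then have "(w, b, x) \<in> (\<lambda>b. (w, b, x)) ` arc n w x" by (rule imageI)
      then show ?thesis using h abc by simp
    next
      assume h: "c = w \<and> a = x"
      then have "b \<in> ?I \<inter> ?O" using inA by simp
      then have "(x, b, w) \<in> (\<lambda>d. (x, d, w)) ` (?I \<inter> ?O)" by (rule imageI)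
      then show ?thesis using h abc by simp
    qed
  qed
  have YB: "?Y \<subseteq> ?B - ?A"
  proof
    fix t assume "t \<in> ?Y"
    then consider (p) p where "p \<in> ?I - ?O" "t = (p, w, x)" | (d) d where "d \<in> ?O - ?I" "t = (w, x, d)"
      by blast
    then show "t \<in> ?B - ?A"
    proof cases
      case p
      have ep: "E p w" "\<not> E x p" using p by auto
      have c: "cw n x p w" using IC ep by blast
      then have c2: "cw n p w x" using cw_rot by blast
      have "\<not> E p x" using ci[OF c2] wx by blast
      moreover have "p < n" "p \<noteq> w" "p \<noteq> x" using c by (auto simp: cw_iff)
      ultimately have "t \<in> ?B" using p ep wx by (simp add: P3set_def E'_def)
      moreover have "t \<notin> ?A" using p wx by (simp add: P3set_def)
      ultimately show ?thesis by blast
    next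
      case d
      have ed: "E x d" "\<not> E d w" using d by auto
      have c: "cw n x d w" using OC ed by blast
      have "\<not> E w d" using Outarc c cw_not_both by blast
      moreover have "d < n" "d \<noteq> w" "d \<noteq> x" using c by (auto simp: cw_iff)
      ultimately have "t \<in> ?B" using d ed wx by (simp add: P3set_def E'_def)
      moreover have "t \<notin> ?A" using d wx by (simp add: P3set_def)
      ultimately show ?thesis by blast
    qed
  qed
  have cY: "card ?Y = card (?I - ?O) + card (?O - ?I)"
  proof -
    have i1: "inj_on (\<lambda>p. (p, w, x)) (?I - ?O)" by (rule inj_onI) auto
    have i2: "inj_on (\<lambda>d. (w, x, d)) (?O - ?I)" by (rule inj_onI) auto
    have disj: "(\<lambda>p. (p, w, x)) ` (?I - ?O) \<inter> (\<lambda>d. (w, x, d)) ` (?O - ?I) = {}"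
    proof (rule equals0I)
      fix t assume "t \<in> (\<lambda>p. (p, w, x)) ` (?I - ?O) \<inter> (\<lambda>d. (w, x, d)) ` (?O - ?I)"
      then obtain p d where "t = (p, w, x)" "t = (w, x, d)" by blast
      then show False using wx(3) by simp
    qed
    have f1: "finite ((\<lambda>p. (p, w, x)) ` (?I - ?O))" using finI by simp
    have f2: "finite ((\<lambda>d. (w, x, d)) ` (?O - ?I))" using finO by simp
    have "card ?Y = card ((\<lambda>p. (p, w, x)) ` (?I - ?O)) + card ((\<lambda>d. (w, x, d)) ` (?O - ?I))"
      by (rule card_Un_disjoint[OF f1 f2 disj])
    then show ?thesis using card_image[OF i1] card_image[OF i2] by simp
  qed
  have cX: "card ?X \<le> (k - 1) + card (?I \<inter> ?O)"
  proof -
    have "card ?X \<le> card ((\<lambda>b. (w, b, x)) ` arc n w x) + card ((\<lambda>d. (x, d, w)) ` (?I \<inter> ?O))"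
      by (rule card_Un_le)
    also have "\<dots> \<le> card (arc n w x) + card (?I \<inter> ?O)"
    proof (rule add_le_mono)
      show "card ((\<lambda>b. (w, b, x)) ` arc n w x) \<le> card (arc n w x)"
        by (rule card_image_le[OF finite_arc])
      have "finite (?I \<inter> ?O)" using finI by simp
      then show "card ((\<lambda>d. (x, d, w)) ` (?I \<inter> ?O)) \<le> card (?I \<inter> ?O)"
        by (rule card_image_le)
    qed
    finally show ?thesis using card_arc[of n w x] dk by simp
  qed
  have trade: "card ?A + card ?Y \<le> card ?B + card ?X"
    using card_trade[OF finite_P3set finite_P3set _ AB YB] finI finO finite_arc by auto
  define q where "q = (if k \<le> w then w - k else w + n - k)"
  have kn: "k < n" using k4 k1 by linarith
  have q: "q < n" "q \<noteq> w" "dd n q w = k" using kn k1 wx unfolding q_def dd_def by auto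
  have arcI: "arc n q w \<subseteq> ?I"
  proof
    fix b assume "b \<in> arc n q w"
    then have c: "cw n q b w" unfolding arc_def by auto
    then have "dd n b w < k" using cw_dd2 q by fastforce
    then show "b \<in> ?I" using mini c by (auto simp: cw_iff)
  qed
  have cI: "k - 1 \<le> card ?I"
  proof -
    have "dist_cw n q w = k" using dist_eq[of q n w] q wx(1) by simp
    then have "card (arc n q w) = k - 1" using card_arc[of n q w] by simp
    then show ?thesis using card_mono[OF finI arcI] by linarith
  qed
  have cIL: "card ?I \<le> L"
  proof -
    have sub: "?I \<subseteq> {z. z < n \<and> z \<noteq> w \<and> dd n z w \<le> L}"
      using dig maxL dist_dd by fastforce
    have fin: "finite {z. z < n \<and> z \<noteq> w \<and> dd n z w \<le> L}" by simp
    have "card ?I \<le> card {z. z < n \<and> z \<noteq> w \<and> dd n z w \<le> L}" by (rule card_mono[OF fin sub])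
    then show ?thesis using card_dd_le'[of w n L] wx by linarith
  qed
  have cOL: "card ?O \<le> L"
  proof -
    have sub: "?O \<subseteq> {z. z < n \<and> z \<noteq> x \<and> dd n x z \<le> L}"
      using dig maxL dist_dd by fastforce
    have fin: "finite {z. z < n \<and> z \<noteq> x \<and> dd n x z \<le> L}" by simp
    have "card ?O \<le> card {z. z < n \<and> z \<noteq> x \<and> dd n x z \<le> L}" by (rule card_mono[OF fin sub])
    then show ?thesis using card_dd_le[of x n L] wx by linarith
  qed
  have cC: "card ?C = n - k - 1"
  proof -
    have "dist_cw n x w = dd n x w" by (rule dist_eq) (use wx in auto)
    moreover have "dd n x w = n - k" using dd_sum[of w n x] wx ddk by simp
    ultimately show ?thesis using card_arc[of n x w] by simp
  qed
  have main: "card ?A \<le> card ?B \<and> (L \<le> k \<longrightarrow> 2 \<le> k \<or> (\<exists>p. E p w) \<longrightarrow> card ?A < card ?B)"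
  proof (cases "?I \<inter> ?O = {}")
    case True
    then have cY2: "card ?Y = card ?I + card ?O"
      using cY finI finO by (simp add: Diff_triv Int_commute)
    have cX2: "card ?X \<le> k - 1" using cX True by simp
    have o1: "1 \<le> card ?O" if k2: "2 \<le> k"
    proof -
      define s where "s = (if x + 1 < n then x + 1 else 0)"
      have "s < n" "s \<noteq> x" "dd n x s < k" using wx k2 n4 unfolding s_def dd_def by auto
      then have "E x s" using mini wx by blast
      then have "?O \<noteq> {}" by blast
      then show "1 \<le> card ?O" using finO by (simp add: Suc_le_eq card_gt_0_iff)
    qed
    have i1: "1 \<le> card ?I" if "\<exists>p. E p w"
    proof -
      have "?I \<noteq> {}" using that by blast
      then show "1 \<le> card ?I" using finI by (simp add: Suc_le_eq card_gt_0_iff)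
    qed
    have kk: "k \<le> card ?I + card ?O" if h: "2 \<le> k \<or> (\<exists>p. E p w)"
    proof (cases "2 \<le> k")
      case True then show ?thesis using o1 cI by linarith
    next
      case False then have "\<exists>p. E p w" using h by blast
      then have "1 \<le> card ?I" by (rule i1)
      then show ?thesis using k1 False by linarith
    qed
    have "card ?A \<le> card ?B" using trade cI cY2 cX2 by linarith
    moreover have "card ?A < card ?B" if "2 \<le> k \<or> (\<exists>p. E p w)"
      using trade cY2 cX2 kk[OF that] k1 by linarith
    ultimately show ?thesis by blast
  next
    case False
    then obtain d where d: "E d w" "E x d" by blast
    have cov: "?C \<subseteq> ?I \<union> ?O"
    proof
      fix z assume "z \<in> ?C"
      then have cz: "cw n x z w" unfolding arc_def by auto
      have cd: "cw n x d w" using OC d by blast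
      show "z \<in> ?I \<union> ?O"
      proof (cases "z = d")
        case True then show ?thesis using d by auto
      next
        case False
        then have "cw n x z d \<or> cw n d z w" using cw_split[OF cz cd] by blast
        then show ?thesis using ci d by blast
      qed
    qed
    have sub: "?I \<union> ?O \<subseteq> ?C" using IC OC unfolding arc_def by (auto simp: cw_iff)
    have "?I \<union> ?O = ?C" using cov sub by (rule subset_antisym[rotated])
    then have U: "card (?I \<union> ?O) = n - k - 1" using cC by simp
    have e1: "card ?I = card (?I - ?O) + card (?I \<inter> ?O)"
      using card_Int_Diff[OF finI, of ?O] by simp
    have e2: "card ?O = card (?O - ?I) + card (?I \<inter> ?O)"
      using card_Int_Diff[OF finO, of ?I] by (simp add: Int_commute)
    have e3: "card (?I \<union> ?O) = card (?I - ?O) + card (?O - ?I) + card (?I \<inter> ?O)"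
    proof -
      have "?I \<union> ?O = (?I - ?O) \<union> (?O - ?I) \<union> (?I \<inter> ?O)" by blast
      moreover have "card ((?I - ?O) \<union> (?O - ?I) \<union> (?I \<inter> ?O)) = card ((?I - ?O) \<union> (?O - ?I)) + card (?I \<inter> ?O)"
        using finI finO by (intro card_Un_disjoint) auto
      moreover have "card ((?I - ?O) \<union> (?O - ?I)) = card (?I - ?O) + card (?O - ?I)"
        using finI finO by (intro card_Un_disjoint) auto
      ultimately show ?thesis by simp
    qed
    have m1: "1 \<le> card (?I \<inter> ?O)" using False finI by (simp add: Suc_le_eq card_gt_0_iff)
    have "card ?A \<le> card ?B" using trade cX cY e1 e2 e3 U cIL cOL L2 k4 by linarith
    moreover have "k < L" using e1 e2 e3 U cIL cOL L2 k4 m1 by linarith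
    ultimately show ?thesis by simp
  qed
  show "card (P3set n E) \<le> card (P3set n E')" using main by simp
  show "L \<le> k \<Longrightarrow> 2 \<le> k \<or> (\<exists>p. E p w) \<Longrightarrow> card (P3set n E) < card (P3set n E')" using main by simp
qed

lemma xi_add:
  assumes ne: "non_edge n E w x" and dk: "dist_cw n w x = k"
    and minimal: "\<And>a b. non_edge n E a b \<Longrightarrow> k \<le> dist_cw n a b"
    and e: "E u0 v0" and big: "k < dist_cw n u0 v0"
  shows "xi n (\<lambda>a b. E a b \<or> (a = w \<and> b = x)) < xi n E"
proof -
  let ?E' = "\<lambda>a b. E a b \<or> (a = w \<and> b = x)"
  have sub: "XIset n ?E' \<subseteq> XIset n E"
  proof
    fix t assume t: "t \<in> XIset n ?E'"
    obtain u v a b where t': "t = ((u, v), (a, b))" by (cases t) auto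
    from t t' have h: "u < n" "v < n" "?E' u v" "non_edge n ?E' a b" "dist_cw n u v > dist_cw n a b"
      unfolding XIset_def by auto
    have nab: "non_edge n E a b" using h(4) unfolding non_edge_def by auto
    have "E u v"
    proof (rule ccontr)
      assume "\<not> E u v"
      then have "u = w" "v = x" using h by auto
      then show False using h(5) dk minimal[OF nab] by simp
    qed
    then show "t \<in> XIset n E" using t' h nab unfolding XIset_def by auto
  qed
  have "((u0, v0), (w, x)) \<in> XIset n E - XIset n ?E'"
    using e ne big dk dig[OF e] unfolding XIset_def non_edge_def by auto
  then have "XIset n ?E' \<subset> XIset n E" using sub by blast
  then show ?thesis unfolding xi_eq by (rule psubset_card_mono[OF finite_XIset])
qed

lemma xi_rem:
  assumes e: "E u0 v0" and maxL: "\<And>a b. E a b \<Longrightarrow> dist_cw n a b \<le> dist_cw n u0 v0"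
    and half: "2 * dist_cw n u0 v0 \<le> n"
    and ne: "non_edge n E w x" and small: "dist_cw n w x < dist_cw n u0 v0"
  shows "xi n (\<lambda>a b. E a b \<and> (a, b) \<noteq> (u0, v0)) < xi n E"
proof -
  let ?E' = "\<lambda>a b. E a b \<and> (a, b) \<noteq> (u0, v0)"
  have u0: "u0 < n" "v0 < n" "u0 \<noteq> v0" using dig[OF e] by auto
  have rev: "dist_cw n v0 u0 = n - dist_cw n u0 v0"
    using dist_eq[of u0 n v0] dist_eq[of v0 n u0] dd_sum[of u0 n v0] u0 by simp
  have sub: "XIset n ?E' \<subseteq> XIset n E"
  proof
    fix t assume t: "t \<in> XIset n ?E'"
    obtain u v a b where t': "t = ((u, v), (a, b))" by (cases t) auto
    from t t' have h: "u < n" "v < n" "E u v" "non_edge n ?E' a b" "dist_cw n u v > dist_cw n a b"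
      unfolding XIset_def by auto
    have "non_edge n E a b"
    proof (rule ccontr)
      assume "\<not> non_edge n E a b"
      then have "(a, b) = (u0, v0) \<or> (b, a) = (u0, v0)" using h(4) unfolding non_edge_def by auto
      then have "dist_cw n u0 v0 \<le> dist_cw n a b" using rev half by auto
      then show False using maxL[OF h(3)] h(5) by simp
    qed
    then show "t \<in> XIset n E" using t' h unfolding XIset_def by auto
  qed
  have "((u0, v0), (w, x)) \<in> XIset n E - XIset n ?E'"
    using e ne small u0 unfolding XIset_def by auto
  then have "XIset n ?E' \<subset> XIset n E" using sub by blast
  then show ?thesis unfolding xi_eq by (rule psubset_card_mono[OF finite_XIset])
qed

end


definition sc :: "nat \<Rightarrow> nat \<Rightarrow> nat" where
  "sc n z = (if z + 1 < n then z + 1 else 0)"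

lemma sc_dd: "x < n \<Longrightarrow> 2 \<le> n \<Longrightarrow> dd n x (sc n x) = 1 \<and> sc n x < n \<and> sc n x \<noteq> x"
  by (auto simp: dd_def sc_def)

lemma dd1_sc: "a < n \<Longrightarrow> b < n \<Longrightarrow> dd n a b = 1 \<Longrightarrow> b = sc n a"
  by (auto simp: dd_def sc_def split: if_splits)

lemma sc_pow: "a < n \<Longrightarrow> (sc n ^^ j) a = (a + j) mod n"
proof (induction j)
  case 0 then show ?case by simp
next
  case (Suc j)
  have r: "(a + j) mod n < n" using Suc.prems by simp
  have "(a + Suc j) mod n = Suc (a + j) mod n" by simp
  also have "\<dots> = (if Suc ((a + j) mod n) = n then 0 else Suc ((a + j) mod n))" by (rule mod_Suc)
  also have "\<dots> = sc n ((a + j) mod n)" using r unfolding sc_def by auto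
  finally show ?case using Suc by simp
qed

lemma dd_back: "a < n \<Longrightarrow> b < n \<Longrightarrow> (a + dd n a b) mod n = b"
proof (cases "a \<le> b")
  case True
  assume "a < n" "b < n" then show ?thesis using True by (simp add: dd_def)
next
  case False
  assume "a < n" "b < n"
  then have "a + dd n a b = b + n" using False by (simp add: dd_def)
  then show ?thesis using \<open>b < n\<close> by simp
qed

theorem mainTheorem6:
  fixes n :: nat and E :: "nat \<Rightarrow> nat \<Rightarrow> bool"
  assumes "n \<ge> 4" and "optimal n E"
  shows "ereal (real n / 4) < alphaG n E"
proof (rule ccontr)
  assume neg: "\<not> ereal (real n / 4) < alphaG n E"
  have admE: "admissible n E" and maxP: "\<And>E'. admissible n E' \<Longrightarrow> P3t n E' \<le> P3t n E"
    and minX: "\<And>E'. admissible n E' \<Longrightarrow> P3t n E' = P3t n E \<Longrightarrow> xi n E \<le> xi n E'"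
    using assms(2) unfolding optimal_def by auto
  interpret ag n E using assms(1) admE by unfold_locales
  have better: "False" if "admissible n E'"
      "card (P3set n E) < card (P3set n E') \<or> (card (P3set n E) = card (P3set n E') \<and> xi n E' < xi n E)"
    for E'
    using maxP[OF that(1)] minX[OF that(1)] that(2) unfolding P3t_eq by fastforce
  have exne: "\<exists>u v. non_edge n E u v"
  proof (rule ccontr)
    assume "\<not> (\<exists>u v. non_edge n E u v)"
    then have "alphaG n E = \<infinity>" unfolding alphaG_def by auto
    then show False using neg by simp
  qed
  let ?D = "{dist_cw n u v | u v. non_edge n E u v}"
  have finD: "finite ?D"
  proof -
    have "?D \<subseteq> (\<lambda>(u, v). dist_cw n u v) ` ({..<n} \<times> {..<n})" unfolding non_edge_def by auto
    then show ?thesis by (rule finite_subset) simp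
  qed
  have neD: "?D \<noteq> {}" using exne by auto
  define k where "k = Min ?D"
  have "alphaG n E = ereal (real k)" unfolding alphaG_def k_def using exne by simp
  then have "real k \<le> real n / 4" using neg by simp
  then have "real (4 * k) \<le> real n" by simp
  then have k4: "4 * k \<le> n" by (simp only: of_nat_le_iff)
  have "k \<in> ?D" using Min_in[OF finD neD] k_def by simp
  then obtain w0 x0 where ne0: "non_edge n E w0 x0" and dk0: "dist_cw n w0 x0 = k" by auto
  have minimal: "\<And>a b. non_edge n E a b \<Longrightarrow> k \<le> dist_cw n a b"
    unfolding k_def using Min_le[OF finD] by blast
  have wx0: "w0 < n" "x0 < n" "w0 \<noteq> x0" using ne0 unfolding non_edge_def by auto
  have k1: "1 \<le> k" using dk0 dist_eq[OF wx0] dd_pos[OF wx0] by simp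
  show False
  proof (cases "\<exists>u v. E u v")
    case False
    define E2 where "E2 = (\<lambda>(a::nat) (b::nat). (a = 0 \<and> b = 1) \<or> (a = 1 \<and> b = 2))"
    have a2: "admissible n E2"
      unfolding admissible_def is_digraph_def two_free_def circ_interval_def
    proof (intro conjI)
      show "\<forall>u v. E2 u v \<longrightarrow> u < n \<and> v < n \<and> u \<noteq> v" using n4 unfolding E2_def by auto
      show "\<forall>u v. u \<noteq> v \<longrightarrow> \<not> (E2 u v \<and> E2 v u)" unfolding E2_def by auto
      show "\<forall>u v w. cw n u v w \<and> E2 u w \<longrightarrow> E2 u v \<and> E2 v w"
        unfolding E2_def by (auto simp: cw_iff dd_def)
    qed
    have "(0, 1, 2) \<in> P3set n E2" using n4 unfolding P3set_def E2_def by auto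
    then have c2: "0 < card (P3set n E2)" using finite_P3set card_gt_0_iff by blast
    have pe: "P3set n E = {}" using False unfolding P3set_def by auto
    show False by (rule better[OF a2]) (simp add: c2 pe)
  next
    case True
    let ?Ls = "{dist_cw n u v | u v. E u v}"
    have finL: "finite ?Ls"
    proof -
      have "?Ls \<subseteq> (\<lambda>(u, v). dist_cw n u v) ` ({..<n} \<times> {..<n})" using dig by auto
      then show ?thesis by (rule finite_subset) simp
    qed
    have neL: "?Ls \<noteq> {}" using True by auto
    define L where "L = Max ?Ls"
    have "L \<in> ?Ls" using Max_in[OF finL neL] L_def by simp
    then obtain u0 v0 where e0: "E u0 v0" and dL: "dist_cw n u0 v0 = L" by auto
    have maxL: "\<And>a b. E a b \<Longrightarrow> dist_cw n a b \<le> L"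
      unfolding L_def using Max_ge[OF finL] by blast
    have maxL': "\<And>a b. E a b \<Longrightarrow> dist_cw n a b \<le> dist_cw n u0 v0" using maxL dL by simp
    have uv0: "u0 < n" "v0 < n" "u0 \<noteq> v0" using dig[OF e0] by auto
    have L1: "1 \<le> L" using dL dist_eq[OF uv0] dd_pos[OF uv0] by simp
    have rev: "dist_cw n v0 u0 = n - L"
      using dL dist_eq[OF uv0] dist_eq[of v0 n u0] uv0 dd_sum[OF uv0] by simp
    let ?E' = "\<lambda>a b. E a b \<and> (a, b) \<noteq> (u0, v0)"
    consider "n < 2 * L" | "2 * L = n" | "2 * L < n" by linarith
    then show False
    proof cases
      case 1
      have "card (P3set n E) + (L - 1) \<le> card (P3set n ?E') + (n - L - 1)"
        using removal(2)[OF e0 maxL'] dL rev by simp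
      then have "card (P3set n E) < card (P3set n ?E')" using 1 L1 n4 by arith
      then show False using better[OF removal(1)[OF e0 maxL']] by blast
    next
      case 2
      have "card (P3set n E) + (L - 1) \<le> card (P3set n ?E') + (n - L - 1)"
        using removal(2)[OF e0 maxL'] dL rev by simp
      then have c: "card (P3set n E) \<le> card (P3set n ?E')" using 2 L1 n4 by arith
      have "xi n ?E' < xi n E"
        using xi_rem[OF e0 maxL' _ ne0] 2 dL dk0 k4 k1 by simp
      then show False using better[OF removal(1)[OF e0 maxL']] c by linarith
    next
      case 3
      show False
      proof (cases "k < L")
        case True
        let ?E2 = "\<lambda>a b. E a b \<or> (a = w0 \<and> b = x0)"
        have "card (P3set n E) \<le> card (P3set n ?E2)"
          using addition(2)[OF ne0 dk0 minimal maxL 3 k4] .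
        moreover have "xi n ?E2 < xi n E" using xi_add[OF ne0 dk0 minimal e0] True dL by simp
        ultimately show False using better[OF addition(1)[OF ne0 dk0 minimal maxL 3 k4]] by linarith
      next
        case False
        then have Lk: "L \<le> k" by simp
        obtain w x where ne: "non_edge n E w x" and dk: "dist_cw n w x = k"
          and cond: "2 \<le> k \<or> (\<exists>p. E p w)"
        proof (cases "2 \<le> k")
          case True then show ?thesis using that ne0 dk0 by blast
        next
          case False
          then have kk: "k = 1" using k1 by simp
          then have LL: "L = 1" using Lk L1 by simp
          have n2: "2 \<le> n" using n4 by simp
          have "\<exists>z. z < n \<and> E z (sc n z) \<and> \<not> E (sc n z) (sc n (sc n z))"
          proof (rule ccontr)
            assume "\<not> ?thesis"
            then have step: "\<And>z. z < n \<Longrightarrow> E z (sc n z) \<Longrightarrow> E (sc n z) (sc n (sc n z))" by blast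
            have "dd n u0 v0 = 1" using dL LL dist_eq[OF uv0] by simp
            then have "v0 = sc n u0" using dd1_sc uv0 by blast
            then have base: "E u0 (sc n u0)" using e0 by simp
            have all: "E ((sc n ^^ j) u0) (sc n ((sc n ^^ j) u0))" for j
            proof (induction j)
              case 0 then show ?case using base by simp
            next
              case (Suc j)
              have "(sc n ^^ j) u0 < n" using sc_pow[OF uv0(1)] n2 by simp
              then show ?case using step Suc by simp
            qed
            have "(sc n ^^ dd n u0 w0) u0 = w0" using sc_pow[OF uv0(1)] dd_back uv0 wx0 by simp
            then have "E w0 (sc n w0)" using all[of "dd n u0 w0"] by simp
            moreover have "x0 = sc n w0" using dd1_sc wx0 dk0 kk dist_eq[OF wx0] by simp
            ultimately show False using ne0 unfolding non_edge_def by simp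
          qed
          then obtain z where z: "z < n" "E z (sc n z)" "\<not> E (sc n z) (sc n (sc n z))" by blast
          let ?w = "sc n z" and ?x = "sc n (sc n z)"
          have w: "?w < n" using sc_dd[OF z(1) n2] by simp
          have x: "?x < n" "?x \<noteq> ?w" "dd n ?w ?x = 1" using sc_dd[OF w n2] by auto
          have dwx: "dist_cw n ?w ?x = 1" using dist_eq[of ?w n ?x] w x by simp
          have "\<not> E ?x ?w"
          proof
            assume "E ?x ?w"
            then have "dist_cw n ?x ?w \<le> 1" using maxL LL by fastforce
            moreover have "dist_cw n ?x ?w = n - 1"
              using dist_eq[of ?x n ?w] dist_eq[of ?w n ?x] dd_sum[of ?w n ?x] w x dwx by simp
            ultimately show False using n4 by simp
          qed
          then have "non_edge n E ?w ?x" using z w x unfolding non_edge_def by auto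
          then show ?thesis using that dwx kk z(2) by blast
        qed
        have "card (P3set n E) < card (P3set n (\<lambda>a b. E a b \<or> (a = w \<and> b = x)))"
          using addition(3)[OF ne dk minimal maxL 3 k4 Lk cond] .
        then show False using better[OF addition(1)[OF ne dk minimal maxL 3 k4]] by blast
      qed
    qed
  qed
qed


end
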